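(* Assume the entropy variable map $\mathbf{u}\mapsto\mathbf{w}(\mathbf{u})$ is a $C^1$ diffeomorphism from $\mathcal{U}$ onto a convex set $\mathcal{W}$, with inverse $\mathbf{w}\mapsto\mathbf{u}(\mathbf{w})$, and that $\mathbf{A}$ and $\mathbf{H}$ are continuous. For $\mathbf{u}_L,\mathbf{u}_R\in\mathcal{U}$ let $\Phi(s):=\mathbf{w}_L+s[\![\mathbf{w}]\!]$, $s\in[0,1]$, be the linear path in entropy variables (corresponding to the path $s\mapsto\mathbf{u}(\Phi(s))$ in state space), and define $$\mathbf{D}^-(\mathbf{u}_L,\mathbf{u}_R)=\int_0^1(1-s)\,\mathbf{A}(\mathbf{u}(\Phi(s)))\,\mathbf{H}(\Phi(s))\,ds\;[\![\mathbf{w}]\!],\qquad \mathbf{D}^+(\mathbf{u}_L,\mathbf{u}_R)=\int_0^1 s\,\mathbf{A}(\mathbf{u}(\Phi(s)))\,\mathbf{H}(\Phi(s))\,ds\;[\![\mathbf{w}]\!].$$ Then $\mathbf{D}^\pm$ are entropy conservative fluctuations, i.e. they satisfy (C1)–(C5) with respect to the family of paths $\Phi(s;\mathbf{u}_L,\mathbf{u}_R)=\mathbf{u}(\mathbf{w}_L+s[\![\mathbf{w}]\!])$.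
   Context: System: $\mathbf{u}_t+\mathbf{f}(\mathbf{u})_x+\mathbf{B}(\mathbf{u})\mathbf{u}_x=0$, $\mathbf{u}\in\mathcal{U}\subset\mathbb{R}^n$, generalized Jacobian $\mathbf{A}:=\mathbf{f}_{\mathbf{u}}+\mathbf{B}$. Entropy pair: a strictly convex $C^2$ function $S$ and entropy flux $q$ with $q_{\mathbf{u}}=\mathbf{w}^T(\mathbf{f}_{\mathbf{u}}+\mathbf{B})$, where $\mathbf{w}(\mathbf{u}):=S_{\mathbf{u}}(\mathbf{u})$ are the entropy variables; $\mathbf{H}^{-1}(\mathbf{u}):=\mathbf{w}_{\mathbf{u}}=S_{\mathbf{u}\mathbf{u}}$ and $\mathbf{H}(\mathbf{w}):=\mathbf{u}_{\mathbf{w}}$ its inverse, viewed as a function of $\mathbf{w}$. Notation: $[\![\cdot]\!]=(\cdot)_R-(\cdot)_L$, $\mathbf{w}_L=\mathbf{w}(\mathbf{u}_L)$, $q_L=q(\mathbf{u}_L)$, etc. EC fluctuation conditions, for all $\mathbf{u},\mathbf{u}_L,\mathbf{u}_R$, with a given family of paths $\Phi(s;\mathbf{u}_L,\mathbf{u}_R)$: (C1) $\mathbf{D}^\pm(\mathbf{u},\mathbf{u})=0$; (C2) $\mathbf{D}^-(\mathbf{u}_L,\mathbf{u}_R)+\mathbf{D}^+(\mathbf{u}_L,\mathbf{u}_R)=\int_0^1\mathbf{A}(\Phi(s;\mathbf{u}_L,\mathbf{u}_R))\partial_s\Phi(s;\mathbf{u}_L,\mathbf{u}_R)\,ds$; (C3)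 $\mathbf{D}^-(\mathbf{u}_L,\mathbf{u}_R)+\mathbf{D}^+(\mathbf{u}_R,\mathbf{u}_L)=0$; (C4) $\mathbf{w}_L^T\mathbf{D}^-(\mathbf{u}_L,\mathbf{u}_R)+\mathbf{w}_R^T\mathbf{D}^+(\mathbf{u}_L,\mathbf{u}_R)=q_R-q_L$; (C5) $\frac{\partial\mathbf{D}^-(\mathbf{u}_L,\mathbf{u}_R)}{\partial\mathbf{u}_R}\big|_{\mathbf{u}_R=\mathbf{u}_L}=\frac12\mathbf{A}(\mathbf{u}_L)$. *)

theory Defs
  imports "HOL-Analysis.Analysis"
begin

definition strictly_convex_on :: "('a::real_vector) set \<Rightarrow> ('a \<Rightarrow> real) \<Rightarrow> bool" where
  "strictly_convex_on U S \<longleftrightarrow>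
     (\<forall>x\<in>U. \<forall>y\<in>U. x \<noteq> y \<longrightarrow> closed_segment x y \<subseteq> U \<longrightarrow>
        (\<forall>t::real. 0 < t \<and> t < 1 \<longrightarrow>
           S ((1 - t) *\<^sub>R x + t *\<^sub>R y) < (1 - t) * S x + t * S y))"

definition wpath :: "('a::real_vector \<Rightarrow> 'b::real_vector) \<Rightarrow> 'a \<Rightarrow> 'a \<Rightarrow> real \<Rightarrow> 'b" where
  "wpath w uL uR s = w uL + s *\<^sub>R (w uR - w uL)"

definition Dminus ::
  "(real^'n \<Rightarrow> real^'n^'n) \<Rightarrow> (real^'n \<Rightarrow> real^'n^'n) \<Rightarrow> (real^'n \<Rightarrow> real^'n)
   \<Rightarrow> (real^'n \<Rightarrow> real^'n) \<Rightarrow> real^'n \<Rightarrow> real^'n \<Rightarrow> real^'n" where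
  "Dminus A H uofw w uL uR =
     integral {0..1} (\<lambda>s. (1 - s) *\<^sub>R (A (uofw (wpath w uL uR s)) ** H (wpath w uL uR s)))
       *v (w uR - w uL)"

definition Dplus ::
  "(real^'n \<Rightarrow> real^'n^'n) \<Rightarrow> (real^'n \<Rightarrow> real^'n^'n) \<Rightarrow> (real^'n \<Rightarrow> real^'n)
   \<Rightarrow> (real^'n \<Rightarrow> real^'n) \<Rightarrow> real^'n \<Rightarrow> real^'n \<Rightarrow> real^'n" where
  "Dplus A H uofw w uL uR =
     integral {0..1} (\<lambda>s. s *\<^sub>R (A (uofw (wpath w uL uR s)) ** H (wpath w uL uR s)))
       *v (w uR - w uL)"

definition upath :: "(real^'n \<Rightarrow> real^'n) \<Rightarrow> (real^'n \<Rightarrow> real^'n) \<Rightarrow> real^'n \<Rightarrow> real^'n \<Rightarrow> real \<Rightarrow> real^'n" where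
  "upath uofw w uL uR s = uofw (wpath w uL uR s)"

end

theory Submission
  imports Defs
begin

lemma mm_radd: "((A::real^'n^'m) + B) ** (C::real^'k^'n) = A ** C + B ** C"
  by (simp add: matrix_matrix_mult_def vec_eq_iff sum.distrib algebra_simps)
lemma mm_rscale: "((c::real) *\<^sub>R (A::real^'n^'m)) ** (C::real^'k^'n) = c *\<^sub>R (A ** C)"
  by (simp add: matrix_matrix_mult_def vec_eq_iff sum_distrib_left algebra_simps)
lemma mm_lscale: "(A::real^'n^'m) ** ((c::real) *\<^sub>R (C::real^'k^'n)) = c *\<^sub>R (A ** C)"
  by (simp add: matrix_matrix_mult_def vec_eq_iff sum_distrib_left algebra_simps)
lemma bb_mm: "bounded_bilinear ((**) :: real^'n^'m \<Rightarrow> real^'k^'n \<Rightarrow> real^'k^'m)"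
  unfolding bilinear_conv_bounded_bilinear[symmetric] bilinear_def
  by (auto simp: linear_iff matrix_add_ldistrib mm_radd mm_rscale mm_lscale)
lemma bb_mv: "bounded_bilinear ((*v) :: real^'n^'m \<Rightarrow> real^'n \<Rightarrow> real^'m)"
  unfolding bilinear_conv_bounded_bilinear[symmetric] bilinear_def
  by (auto simp: linear_iff matrix_vector_right_distrib matrix_vector_mult_add_rdistrib matrix_vector_mult_scaleR scaleR_matrix_vector_assoc)
lemma integral_flip01:
  fixes g :: "real \<Rightarrow> 'a::euclidean_space"
  assumes "g integrable_on {0..1}"
  shows "integral {0..1} (\<lambda>s. g (1 - s)) = integral {0..1} g"
proof -
  from assms obtain i where i: "(g has_integral i) (cbox 0 1)" by (auto simp: integrable_on_def)
  from has_integral_affinity[OF i, of "-1" 1]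
  have "((\<lambda>x. g (1 - x)) has_integral i) ((\<lambda>x. - x + 1) ` cbox 0 1)" by simp
  moreover have "(\<lambda>x::real. - x + 1) ` cbox 0 1 = {0..1}"
    by (auto simp: image_iff intro!: bexI[where x="1 - _"]) 
  ultimately show ?thesis using i by (simp add: integral_unique)
qed

lemma half_integral: "((\<lambda>s::real. 1 - s) has_integral 1/2) {0..1}"
proof -
  have "((\<lambda>s::real. 1 - s) has_integral ((\<lambda>s. s - s^2/2) 1 - (\<lambda>s. s - s^2/2) 0)) {0..1}"
    by (rule fundamental_theorem_of_calculus)
       (auto simp: has_real_derivative_iff_has_vector_derivative[symmetric] intro!: derivative_eq_intros)
  then show ?thesis by simp
qed

lemma deriv_prod_zero:
  fixes pr :: "'b::real_normed_vector \<Rightarrow> 'c::real_normed_vector \<Rightarrow> 'd::real_normed_vector" and M :: "'a::real_normed_vector \<Rightarrow> 'b"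
    and \<delta> :: "'a \<Rightarrow> 'c"
  assumes bb: "bounded_bilinear pr" and Mc: "isCont M x"
    and dd: "(\<delta> has_derivative \<delta>') (at x)" and d0: "\<delta> x = 0"
  shows "((\<lambda>y. pr (M y) (\<delta> y)) has_derivative (\<lambda>h. pr (M x) (\<delta>' h))) (at x)"
proof -
  have bl: "bounded_linear \<delta>'" using dd has_derivative_bounded_linear by blast
  have d1: "((\<lambda>y. pr (M x) (\<delta> y)) has_derivative (\<lambda>h. pr (M x) (\<delta>' h))) (at x)"
    using bounded_linear.has_derivative[OF bounded_bilinear.bounded_linear_right[OF bb] dd] .
  obtain K where K: "K > 0" "\<And>a b. norm (pr a b) \<le> norm a * norm b * K"
    using bounded_bilinear.pos_bounded[OF bb] by blast
  obtain C where C: "C > 0" "\<And>h. norm (\<delta>' h) \<le> norm h * C"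
    using bounded_linear.pos_bounded[OF bl] by blast
  obtain d1 where d1p: "d1 > 0" and d1b: "\<And>y. norm (y - x) < d1 \<Longrightarrow> norm (\<delta> y - \<delta> x - \<delta>' (y - x)) \<le> 1 * norm (y - x)"
    using dd unfolding has_derivative_at_alt by (meson zero_less_one)
  have dbound: "norm (\<delta> y) \<le> (1 + C) * norm (y - x)" if "norm (y - x) < d1" for y
  proof -
    have "norm (\<delta> y) \<le> norm (\<delta> y - \<delta>' (y - x)) + norm (\<delta>' (y - x))"
      by (metis add.commute diff_add_cancel norm_triangle_ineq)
    also have "\<dots> \<le> norm (y - x) + norm (y - x) * C" using d1b[OF that] C(2)[of "y - x"] d0 by simp
    finally show ?thesis by (simp add: algebra_simps)
  qed
  have d2: "((\<lambda>y. pr (M y - M x) (\<delta> y)) has_derivative (\<lambda>h. 0)) (at x)"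
    unfolding has_derivative_at_alt
  proof (intro conjI allI impI)
    show "bounded_linear (\<lambda>h::'a. 0::'d)" by simp
  next
    fix e :: real assume e: "e > 0"
    define e' where "e' = e / (K * (1 + C))"
    have e': "e' > 0" using e K C by (simp add: e'_def)
    obtain d2 where d2: "d2 > 0" "\<And>y. dist y x < d2 \<Longrightarrow> dist (M y) (M x) < e'"
      using Mc e' unfolding continuous_at_eps_delta by blast
    show "\<exists>d>0. \<forall>y. norm (y - x) < d \<longrightarrow>
        norm (pr (M y - M x) (\<delta> y) - pr (M x - M x) (\<delta> x) - 0) \<le> e * norm (y - x)"
    proof (intro exI[of _ "min d1 d2"] conjI allI impI)
      show "min d1 d2 > 0" using d1p d2 by simp
    next
      fix y assume y: "norm (y - x) < min d1 d2"
      have m: "norm (M y - M x) \<le> e'" using d2(2)[of y] y by (simp add: dist_norm less_imp_le)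
      have "norm (pr (M y - M x) (\<delta> y)) \<le> norm (M y - M x) * norm (\<delta> y) * K" by (rule K(2))
      also have "\<dots> \<le> e' * ((1 + C) * norm (y - x)) * K"
        using m dbound[of y] y K C e' by (intro mult_right_mono mult_mono) auto
      also have "\<dots> = e * norm (y - x)" using K(1) C(1) unfolding e'_def by (simp add: divide_simps)
      finally show "norm (pr (M y - M x) (\<delta> y) - pr (M x - M x) (\<delta> x) - 0) \<le> e * norm (y - x)"
        using d0 bounded_bilinear.zero_right[OF bb] by simp
    qed
  qed
  have "((\<lambda>y. pr (M x) (\<delta> y) + pr (M y - M x) (\<delta> y)) has_derivative (\<lambda>h. pr (M x) (\<delta>' h) + 0)) (at x)"
    by (rule has_derivative_add[OF d1 d2])
  moreover have "\<And>y. pr (M x) (\<delta> y) + pr (M y - M x) (\<delta> y) = pr (M y) (\<delta> y)"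
    using bounded_bilinear.diff_left[OF bb] by (simp add: algebra_simps)
  ultimately show ?thesis by simp
qed

theorem theorem2:
  fixes U W :: "(real^'n) set"
    and f :: "real^'n \<Rightarrow> real^'n"
    and Df :: "real^'n \<Rightarrow> real^'n^'n"
    and B :: "real^'n \<Rightarrow> real^'n^'n"
    and S q :: "real^'n \<Rightarrow> real"
    and w :: "real^'n \<Rightarrow> real^'n"
    and Hinv :: "real^'n \<Rightarrow> real^'n^'n"
    and uofw :: "real^'n \<Rightarrow> real^'n"
    and H :: "real^'n \<Rightarrow> real^'n^'n"
    and A :: "real^'n \<Rightarrow> real^'n^'n"
  assumes U_open: "open U"
    (* flux Jacobian f_u and generalized Jacobian A = f_u + B *)
    and f_deriv: "\<And>u. u \<in> U \<Longrightarrow> (f has_derivative (\<lambda>h. Df u *v h)) (at u)"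
    and A_def: "\<And>u. u \<in> U \<Longrightarrow> A u = Df u + B u"
    and A_cont: "continuous_on U A"
    (* entropy S: strictly convex, C^2, with gradient w = S_u and Hessian Hinv = w_u = S_uu *)
    and S_strict: "strictly_convex_on U S"
    and S_deriv: "\<And>u. u \<in> U \<Longrightarrow> (S has_derivative (\<lambda>h. w u \<bullet> h)) (at u)"
    and w_deriv: "\<And>u. u \<in> U \<Longrightarrow> (w has_derivative (\<lambda>h. Hinv u *v h)) (at u)"
    and Hinv_cont: "continuous_on U Hinv"
    (* entropy flux q with q_u = w^T (f_u + B) *)
    and q_deriv: "\<And>u. u \<in> U \<Longrightarrow> (q has_derivative (\<lambda>h. w u \<bullet> (A u *v h))) (at u)"
    (* u \<mapsto> w(u) is a C^1 diffeomorphism of U onto the convex set W with inverse uofw *)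
    and W_convex: "convex W"
    and w_onto: "w ` U = W"
    and uofw_onto: "uofw ` W = U"
    and uofw_w: "\<And>u. u \<in> U \<Longrightarrow> uofw (w u) = u"
    and w_uofw: "\<And>v. v \<in> W \<Longrightarrow> w (uofw v) = v"
    and uofw_deriv: "\<And>v. v \<in> W \<Longrightarrow> (uofw has_derivative (\<lambda>h. H v *v h)) (at v within W)"
    and H_cont: "continuous_on W H"
  shows
    "(\<forall>u\<in>U. Dminus A H uofw w u u = 0 \<and> Dplus A H uofw w u u = 0)
   \<and> (\<forall>uL\<in>U. \<forall>uR\<in>U.
        Dminus A H uofw w uL uR + Dplus A H uofw w uL uR =
        integral {0..1} (\<lambda>s. A (upath uofw w uL uR s) *v
                           vector_derivative (upath uofw w uL uR) (at s within {0..1})))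
   \<and> (\<forall>uL\<in>U. \<forall>uR\<in>U. Dminus A H uofw w uL uR + Dplus A H uofw w uR uL = 0)
   \<and> (\<forall>uL\<in>U. \<forall>uR\<in>U.
        w uL \<bullet> Dminus A H uofw w uL uR + w uR \<bullet> Dplus A H uofw w uL uR = q uR - q uL)
   \<and> (\<forall>uL\<in>U. ((\<lambda>uR. Dminus A H uofw w uL uR) has_derivative
                 (\<lambda>h. ((1/2::real) *\<^sub>R A uL) *v h)) (at uL))"
proof -
  define F where "F v = A (uofw v) ** H v" for v
  have wW: "\<And>u. u \<in> U \<Longrightarrow> w u \<in> W" using w_onto by blast
  have uU: "\<And>v. v \<in> W \<Longrightarrow> uofw v \<in> U" using uofw_onto by blast
  have Pin: "wpath w uL uR s \<in> W" if "uL \<in> U" "uR \<in> U" "s \<in> {0..1}" for uL uR s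
  proof -
    have "wpath w uL uR s = (1 - s) *\<^sub>R w uL + s *\<^sub>R w uR"
      by (simp add: wpath_def algebra_simps)
    then show ?thesis using W_convex wW[OF that(1)] wW[OF that(2)] that(3)
      unfolding convex_def by auto
  qed
  have uofw_cont: "continuous_on W uofw"
    using uofw_deriv has_derivative_continuous continuous_on_eq_continuous_within by blast
  have F_cont: "continuous_on W F"
    unfolding F_def
    by (rule bounded_bilinear.continuous_on[OF bb_mm continuous_on_compose2[OF A_cont uofw_cont] H_cont])
       (use uofw_onto in blast)
  have Gc: "continuous_on {0..1} (\<lambda>s. F (wpath w uL uR s))" if "uL \<in> U" "uR \<in> U" for uL uR
  proof (rule continuous_on_compose2[OF F_cont])
    show "continuous_on {0..1} (wpath w uL uR)" unfolding wpath_def by (intro continuous_intros)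
    show "wpath w uL uR ` {0..1} \<subseteq> W" using Pin that by blast
  qed
  have Gint: "(\<lambda>s. c s *\<^sub>R F (wpath w uL uR s)) integrable_on {0..1}"
    if "uL \<in> U" "uR \<in> U" "continuous_on {0..1} c" for uL uR c
    by (rule integrable_continuous_interval, intro continuous_intros Gc that)
  have Gint1: "(\<lambda>s. F (wpath w uL uR s)) integrable_on {0..1}" if "uL \<in> U" "uR \<in> U" for uL uR
    by (rule integrable_continuous_interval, rule Gc[OF that])
  have gint: "(\<lambda>s. c s *\<^sub>R (F (wpath w uL uR s) *v (w uR - w uL))) integrable_on {0..1}"
    if "uL \<in> U" "uR \<in> U" "continuous_on {0..1} c" for uL uR c
    by (rule integrable_continuous_interval, intro continuous_intros 
        bounded_bilinear.continuous_on[OF bb_mv] Gc that)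
  have Dm: "Dminus A H uofw w uL uR = integral {0..1} (\<lambda>s. (1 - s) *\<^sub>R F (wpath w uL uR s)) *v (w uR - w uL)" for uL uR
    by (simp add: Dminus_def F_def)
  have Dp: "Dplus A H uofw w uL uR = integral {0..1} (\<lambda>s. s *\<^sub>R F (wpath w uL uR s)) *v (w uR - w uL)" for uL uR
    by (simp add: Dplus_def F_def)
  have intmv: "integral {0..1} f *v x = integral {0..1} (\<lambda>s. f s *v x)" if "f integrable_on {0..1}" for f :: "real \<Rightarrow> real^'n^'n" and x
    using integral_linear[OF that bounded_bilinear.bounded_linear_left[OF bb_mv, of x]] by (simp add: o_def)
  have intin: "y \<bullet> integral {0..1} f = integral {0..1} (\<lambda>s. y \<bullet> f s)" if "f integrable_on {0..1}" for f :: "real \<Rightarrow> real^'n" and y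
    using integral_linear[OF that bounded_linear_inner_right[of y]] by (simp add: o_def)
  have pathder: "(upath uofw w uL uR has_vector_derivative (H (wpath w uL uR s) *v (w uR - w uL))) (at s within {0..1})"
    if "uL \<in> U" "uR \<in> U" "s \<in> {0..1}" for uL uR s
  proof -
    have "(wpath w uL uR has_derivative (\<lambda>t. t *\<^sub>R (w uR - w uL))) (at s within {0..1})"
      unfolding wpath_def[abs_def] by (auto intro!: derivative_eq_intros)
    from has_derivative_in_compose2[where t=W and g=uofw and g'="\<lambda>v h. H v *v h", OF uofw_deriv _ that(3) this]
    have "((\<lambda>x. uofw (wpath w uL uR x)) has_derivative (\<lambda>y. H (wpath w uL uR s) *v (y *\<^sub>R (w uR - w uL)))) (at s within {0..1})"
      using Pin that by blast
    then show ?thesis unfolding has_vector_derivative_def upath_def[abs_def]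
      by (simp add: matrix_vector_mult_scaleR)
  qed
  have C1: "\<forall>u\<in>U. Dminus A H uofw w u u = 0 \<and> Dplus A H uofw w u u = 0"
    by (simp add: Dminus_def Dplus_def)
  have C2: "\<forall>uL\<in>U. \<forall>uR\<in>U.
        Dminus A H uofw w uL uR + Dplus A H uofw w uL uR =
        integral {0..1} (\<lambda>s. A (upath uofw w uL uR s) *v
                           vector_derivative (upath uofw w uL uR) (at s within {0..1}))"
  proof (intro ballI)
    fix uL uR assume L: "uL \<in> U" and R: "uR \<in> U"
    let ?G = "\<lambda>s. F (wpath w uL uR s)"
    let ?dw = "w uR - w uL"
    have "Dminus A H uofw w uL uR + Dplus A H uofw w uL uR
        = (integral {0..1} (\<lambda>s. (1 - s) *\<^sub>R ?G s) + integral {0..1} (\<lambda>s. s *\<^sub>R ?G s)) *v ?dw"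
      by (simp add: Dm Dp matrix_vector_mult_add_rdistrib)
    also have "\<dots> = integral {0..1} (\<lambda>s. (1 - s) *\<^sub>R ?G s + s *\<^sub>R ?G s) *v ?dw"
      by (subst integral_add) (auto intro!: Gint L R continuous_intros)
    also have "\<dots> = integral {0..1} ?G *v ?dw"
      by (simp add: scaleR_left_diff_distrib)
    also have "\<dots> = integral {0..1} (\<lambda>s. ?G s *v ?dw)"
      by (rule intmv[OF Gint1[OF L R]])
    also have "\<dots> = integral {0..1} (\<lambda>s. A (upath uofw w uL uR s) *v
                           vector_derivative (upath uofw w uL uR) (at s within {0..1}))"
    proof (rule integral_cong)
      fix s :: real assume s: "s \<in> {0..1}"
      have "vector_derivative (upath uofw w uL uR) (at s within {0..1}) = H (wpath w uL uR s) *v ?dw"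
        by (rule vector_derivative_within_closed_interval[OF _ s pathder[OF L R s]]) simp
      then show "?G s *v ?dw = A (upath uofw w uL uR s) *v
                           vector_derivative (upath uofw w uL uR) (at s within {0..1})"
        by (simp add: F_def upath_def matrix_vector_mul_assoc)
    qed
    finally show "Dminus A H uofw w uL uR + Dplus A H uofw w uL uR =
        integral {0..1} (\<lambda>s. A (upath uofw w uL uR s) *v
                           vector_derivative (upath uofw w uL uR) (at s within {0..1}))" .
  qed
  have C3: "\<forall>uL\<in>U. \<forall>uR\<in>U. Dminus A H uofw w uL uR + Dplus A H uofw w uR uL = 0"
  proof (intro ballI)
    fix uL uR assume L: "uL \<in> U" and R: "uR \<in> U"
    have pw: "wpath w uR uL s = wpath w uL uR (1 - s)" for s
      by (simp add: wpath_def algebra_simps)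
    have "integral {0..1} (\<lambda>s. s *\<^sub>R F (wpath w uR uL s))
        = integral {0..1} (\<lambda>s. (\<lambda>t. (1 - t) *\<^sub>R F (wpath w uL uR t)) (1 - s))"
      by (simp add: pw)
    also have "\<dots> = integral {0..1} (\<lambda>t. (1 - t) *\<^sub>R F (wpath w uL uR t))"
      by (rule integral_flip01) (auto intro!: Gint L R continuous_intros)
    finally have eq: "integral {0..1} (\<lambda>s. s *\<^sub>R F (wpath w uR uL s))
        = integral {0..1} (\<lambda>t. (1 - t) *\<^sub>R F (wpath w uL uR t))" .
    have "w uL - w uR = - (w uR - w uL)" by simp
    then show "Dminus A H uofw w uL uR + Dplus A H uofw w uR uL = 0"
      unfolding Dm Dp eq by (simp only: bounded_bilinear.minus_right[OF bb_mv]) simp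
  qed
  have C4: "\<forall>uL\<in>U. \<forall>uR\<in>U.
        w uL \<bullet> Dminus A H uofw w uL uR + w uR \<bullet> Dplus A H uofw w uL uR = q uR - q uL"
  proof (intro ballI)
    fix uL uR assume L: "uL \<in> U" and R: "uR \<in> U"
    let ?dw = "w uR - w uL"
    define g where "g s = F (wpath w uL uR s) *v ?dw" for s
    have gi: "(\<lambda>s. c s *\<^sub>R g s) integrable_on {0..1}" if "continuous_on {0..1} c" for c
      unfolding g_def by (rule gint[OF L R that])
    have gc: "continuous_on {0..1} g"
      unfolding g_def by (intro bounded_bilinear.continuous_on[OF bb_mv] Gc L R continuous_intros)
    have Dm': "Dminus A H uofw w uL uR = integral {0..1} (\<lambda>s. (1 - s) *\<^sub>R g s)"
      unfolding Dm by (subst intmv) (auto intro!: Gint L R continuous_intros simp: g_def scaleR_matrix_vector_assoc)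
    have Dp': "Dplus A H uofw w uL uR = integral {0..1} (\<lambda>s. s *\<^sub>R g s)"
      unfolding Dp by (subst intmv) (auto intro!: Gint L R continuous_intros simp: g_def scaleR_matrix_vector_assoc)
    have "w uL \<bullet> Dminus A H uofw w uL uR + w uR \<bullet> Dplus A H uofw w uL uR
        = integral {0..1} (\<lambda>s. w uL \<bullet> ((1 - s) *\<^sub>R g s)) + integral {0..1} (\<lambda>s. w uR \<bullet> (s *\<^sub>R g s))"
      unfolding Dm' Dp' by (subst intin, auto intro!: gi continuous_intros)+
    also have "\<dots> = integral {0..1} (\<lambda>s. w uL \<bullet> ((1 - s) *\<^sub>R g s) + w uR \<bullet> (s *\<^sub>R g s))"
      by (rule integral_add[symmetric])
         (auto intro!: integrable_continuous_interval continuous_intros gc)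
    also have "\<dots> = integral {0..1} (\<lambda>s. wpath w uL uR s \<bullet> g s)"
      by (rule integral_cong) (simp add: wpath_def inner_simps algebra_simps)
    also have "\<dots> = q (upath uofw w uL uR 1) - q (upath uofw w uL uR 0)"
    proof (rule integral_unique, rule fundamental_theorem_of_calculus)
      fix x :: real assume x: "x \<in> {0..1}"
      have ux: "upath uofw w uL uR x \<in> U" unfolding upath_def using uU Pin L R x by blast
      have wx: "w (upath uofw w uL uR x) = wpath w uL uR x" unfolding upath_def using w_uofw Pin L R x by blast
      have "((\<lambda>s. q (upath uofw w uL uR s)) has_derivative
          (\<lambda>t. w (upath uofw w uL uR x) \<bullet> (A (upath uofw w uL uR x) *v (t *\<^sub>R (H (wpath w uL uR x) *v ?dw)))))
          (at x within {0..1})"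
        by (rule has_derivative_compose[OF pathder[OF L R x, unfolded has_vector_derivative_def] q_deriv[OF ux]])
      moreover have "(\<lambda>t. w (upath uofw w uL uR x) \<bullet> (A (upath uofw w uL uR x) *v (t *\<^sub>R (H (wpath w uL uR x) *v ?dw))))
          = (\<lambda>t. t *\<^sub>R (wpath w uL uR x \<bullet> g x))"
        unfolding wx by (simp add: fun_eq_iff g_def F_def upath_def matrix_vector_mult_scaleR matrix_vector_mul_assoc)
      ultimately show "((\<lambda>s. q (upath uofw w uL uR s)) has_vector_derivative (wpath w uL uR x \<bullet> g x)) (at x within {0..1})"
        unfolding has_vector_derivative_def by simp
    qed simp
    also have "\<dots> = q uR - q uL"
      by (simp add: upath_def wpath_def uofw_w L R)
    finally show "w uL \<bullet> Dminus A H uofw w uL uR + w uR \<bullet> Dplus A H uofw w uL uR = q uR - q uL" .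
  qed
  have C5: "\<forall>uL\<in>U. ((\<lambda>uR. Dminus A H uofw w uL uR) has_derivative
                 (\<lambda>h. ((1/2::real) *\<^sub>R A uL) *v h)) (at uL)"
  proof
    fix uL assume L: "uL \<in> U"
    define M where "M uR = integral {0..1} (\<lambda>s. (1 - s) *\<^sub>R F (wpath w uL uR s))" for uR
    have HH: "H (w uL) *v (Hinv uL *v h) = h" for h
    proof -
      have "((\<lambda>x. uofw (w x)) has_derivative (\<lambda>y. H (w uL) *v (Hinv uL *v y))) (at uL within U)"
        by (rule has_derivative_in_compose2[where t=W and g'="\<lambda>v h. H v *v h", OF uofw_deriv _ L])
           (use wW w_deriv[OF L] has_derivative_at_withinI in auto)
      then have d1: "((\<lambda>x. uofw (w x)) has_derivative (\<lambda>y. H (w uL) *v (Hinv uL *v y))) (at uL)"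
        using at_within_open[OF L U_open] by simp
      have d2: "((\<lambda>x. uofw (w x)) has_derivative (\<lambda>y. y)) (at uL)"
        by (rule has_derivative_transform_within_open[OF has_derivative_ident U_open L]) (simp add: uofw_w)
      from has_derivative_unique[OF d1 d2] show ?thesis by (simp add: fun_eq_iff)
    qed
    have MuL: "M uL = (1/2::real) *\<^sub>R (A uL ** H (w uL))"
    proof -
      have "M uL = integral {0..1} (\<lambda>s. (1 - s) *\<^sub>R F (w uL))"
        by (simp add: M_def wpath_def)
      also have "\<dots> = (1/2::real) *\<^sub>R F (w uL)"
        by (rule integral_unique[OF has_integral_scaleR_left[OF half_integral]])
      also have "\<dots> = (1/2::real) *\<^sub>R (A uL ** H (w uL))"
        by (simp add: F_def uofw_w L)
      finally show ?thesis .
    qed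
    have Mc: "isCont M uL"
      unfolding continuous_at_eps_delta
    proof (intro allI impI)
      fix e :: real assume e: "e > 0"
      obtain d1 where d1: "d1 > 0" "\<And>v. v \<in> W \<Longrightarrow> dist v (w uL) < d1 \<Longrightarrow> dist (F v) (F (w uL)) < e/2"
        using F_cont wW[OF L] e unfolding continuous_on_iff by (meson half_gt_zero)
      have "isCont w uL" using w_deriv[OF L] has_derivative_continuous by blast
      then obtain d2 where d2: "d2 > 0" "\<And>x'. dist x' uL < d2 \<Longrightarrow> dist (w x') (w uL) < d1"
        using d1(1) unfolding continuous_at_eps_delta by blast
      obtain d3 where d3: "d3 > 0" "ball uL d3 \<subseteq> U" using U_open L open_contains_ball by blast
      show "\<exists>d>0. \<forall>x'. dist x' uL < d \<longrightarrow> dist (M x') (M uL) < e"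
      proof (intro exI[of _ "min d2 d3"] conjI allI impI)
        show "min d2 d3 > 0" using d2 d3 by simp
      next
        fix x' assume x': "dist x' uL < min d2 d3"
        have X: "x' \<in> U" using d3 x' by (auto simp: dist_commute)
        have dw: "dist (w x') (w uL) < d1" using d2 x' by simp
        have "M x' - M uL = integral {0..1} (\<lambda>s. (1 - s) *\<^sub>R F (wpath w uL x' s) - (1 - s) *\<^sub>R F (w uL))"
        proof -
          have i1: "(\<lambda>s. (1 - s) *\<^sub>R F (wpath w uL x' s)) integrable_on {0..1}"
            by (rule Gint[OF L X]) (intro continuous_intros)
          have i2: "(\<lambda>s. (1 - s) *\<^sub>R F (w uL)) integrable_on {0..1}"
            by (intro integrable_continuous_interval continuous_intros)
          have "\<And>s. wpath w uL uL s = w uL" by (simp add: wpath_def)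
          then show ?thesis using integral_diff[OF i1 i2] by (simp add: M_def)
        qed
        also have "\<dots> = integral {0..1} (\<lambda>s. (1 - s) *\<^sub>R (F (wpath w uL x' s) - F (w uL)))"
          by (simp add: scaleR_right_diff_distrib)
        finally have eqM: "M x' - M uL = \<dots>" .
        have "norm (integral {0..1} (\<lambda>s. (1 - s) *\<^sub>R (F (wpath w uL x' s) - F (w uL)))) \<le> e/2 * (1 - 0)"
        proof (rule integral_bound)
          show "continuous_on {0..1} (\<lambda>s. (1 - s) *\<^sub>R (F (wpath w uL x' s) - F (w uL)))"
            by (intro continuous_intros Gc L X)
        next
          fix t :: real assume t: "t \<in> {0..1}"
          have "dist (wpath w uL x' t) (w uL) = t * dist (w x') (w uL)"
            using t by (simp add: wpath_def dist_norm)
          also have "\<dots> \<le> dist (w x') (w uL)" using t by (simp add: mult_left_le_one_le)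
          finally have "dist (wpath w uL x' t) (w uL) < d1" using dw by simp
          then have "norm (F (wpath w uL x' t) - F (w uL)) < e/2"
            using d1(2) Pin[OF L X t] by (simp add: dist_norm)
          moreover have "\<bar>1 - t\<bar> \<le> 1" using t by simp
          ultimately have "\<bar>1 - t\<bar> * norm (F (wpath w uL x' t) - F (w uL)) \<le> 1 * (e/2)"
            by (intro mult_mono) auto
          then show "norm ((1 - t) *\<^sub>R (F (wpath w uL x' t) - F (w uL))) \<le> e/2" by simp
        qed simp
        then show "dist (M x') (M uL) < e" using eqM e by (simp add: dist_norm)
      qed
    qed
    have dd: "((\<lambda>uR. w uR - w uL) has_derivative (\<lambda>h. Hinv uL *v h)) (at uL)"
      using has_derivative_diff[OF w_deriv[OF L] has_derivative_const[of "w uL"]] by simp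
    from deriv_prod_zero[OF bb_mv Mc dd]
    have "((\<lambda>uR. M uR *v (w uR - w uL)) has_derivative (\<lambda>h. M uL *v (Hinv uL *v h))) (at uL)" by simp
    moreover have "(\<lambda>uR. M uR *v (w uR - w uL)) = (\<lambda>uR. Dminus A H uofw w uL uR)"
      by (simp add: fun_eq_iff Dm M_def)
    moreover have "(\<lambda>h. M uL *v (Hinv uL *v h)) = (\<lambda>h. ((1/2::real) *\<^sub>R A uL) *v h)"
      by (simp add: fun_eq_iff MuL matrix_vector_mul_assoc[symmetric] HH scaleR_matrix_vector_assoc[symmetric] mm_rscale)
    ultimately show "((\<lambda>uR. Dminus A H uofw w uL uR) has_derivative (\<lambda>h. ((1/2::real) *\<^sub>R A uL) *v h)) (at uL)"
      by simp
  qed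
  show ?thesis using C1 C2 C3 C4 C5 by blast
qed

end
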